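(* Let $H$ be a Kekul\'ean hexagonal system and let $C,C'$ be Clar covers of $H$. Then $f(C)\subseteq f(C')$ if and only if every hexagon component of $C$ is a hexagon component of $C'$, and $C$ and $C'$ coincide on all edges of $H$ other than those lying on hexagon components of $C'$ (i.e. such an edge lies in $C$ iff it lies in $C'$).
   Context: A hexagonal system is a 2-connected finite plane graph in which every interior face is a regular hexagon of side length one; its hexagons are the boundaries of its interior faces; it is Kekul\'ean if it has a perfect matching. A Clar cover of $H$ is a spanning subgraph each of whose components is a hexagon of $H$ or a single edge. The resonance graph $R(H)$ has the perfect matchings of $H$ as vertices, two adjacent iff their symmetric difference is the edge set of a hexagon of $H$. For a Clar cover $C$, $f(C)$ denotes the subgraph of $R(H)$ induced by all perfect matchings $M$ of $H$ such that every hexagon component of $C$ is $M$-alternating and every single-edge component of $C$ belongs to $M$. *)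

theory Defs
  imports Main
begin

text \<open>
  Hexagonal systems are encoded inside the hexagonal (honeycomb) lattice.
  Cells (hexagons) of the lattice are indexed by points of the triangular
  lattice, type int * int.  Vertices of the honeycomb are the triangles of the
  triangular lattice: (i, j, True) is the up triangle with corners
  (i,j), (i+1,j), (i,j+1); (i, j, False) is the down triangle with corners
  (i+1,j), (i,j+1), (i+1,j+1).  The hexagonal cell around the lattice point
  (a,b) consists of the six triangles having (a,b) as a corner.
\<close>

type_synonym cell = "int \<times> int"
type_synonym hvertex = "int \<times> int \<times> bool"
type_synonym hedge = "hvertex set"

definition hexV :: "cell \<Rightarrow> hvertex set" where
  "hexV c = (case c of (a, b) \<Rightarrow>
     {(a, b, True), (a - 1, b, True), (a, b - 1, True),
      (a - 1, b, False), (a, b - 1, False), (a - 1, b - 1, False)})"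

definition hexE :: "cell \<Rightarrow> hedge set" where
  "hexE c = (case c of (a, b) \<Rightarrow>
     {{(a, b, True), (a - 1, b, False)},
      {(a - 1, b, False), (a - 1, b, True)},
      {(a - 1, b, True), (a - 1, b - 1, False)},
      {(a - 1, b - 1, False), (a, b - 1, True)},
      {(a, b - 1, True), (a, b - 1, False)},
      {(a, b - 1, False), (a, b, True)}})"

definition cell_adj :: "cell \<Rightarrow> cell \<Rightarrow> bool" where
  "cell_adj c d \<longleftrightarrow> c \<noteq> d \<and> hexE c \<inter> hexE d \<noteq> {}"

text \<open>A hexagonal system, given by its set S of hexagons: a finite nonempty set of
  cells whose union is connected (2-connected plane graph) and has no holes
  (every bounded face is one of its hexagons): every cell outside S lies in an
  infinite connected region of cells outside S.\<close>
definition hexagonal_system :: "cell set \<Rightarrow> bool" where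
  "hexagonal_system S \<longleftrightarrow>
     finite S \<and> S \<noteq> {} \<and>
     (\<forall>c\<in>S. \<forall>d\<in>S. (\<lambda>x y. x \<in> S \<and> y \<in> S \<and> cell_adj x y)\<^sup>*\<^sup>* c d) \<and>
     (\<forall>c. c \<notin> S \<longrightarrow>
        infinite {d. (\<lambda>x y. x \<notin> S \<and> y \<notin> S \<and> cell_adj x y)\<^sup>*\<^sup>* c d})"

definition hs_verts :: "cell set \<Rightarrow> hvertex set" where
  "hs_verts S = (\<Union>c\<in>S. hexV c)"

definition hs_edges :: "cell set \<Rightarrow> hedge set" where
  "hs_edges S = (\<Union>c\<in>S. hexE c)"

definition perfect_matching :: "cell set \<Rightarrow> hedge set \<Rightarrow> bool" where
  "perfect_matching S M \<longleftrightarrow> M \<subseteq> hs_edges S \<and>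
     (\<forall>v\<in>hs_verts S. \<exists>!e. e \<in> M \<and> v \<in> e)"

definition kekulean :: "cell set \<Rightarrow> bool" where
  "kekulean S \<longleftrightarrow> (\<exists>M. perfect_matching S M)"

definition comp_verts :: "hedge set \<Rightarrow> hvertex \<Rightarrow> hvertex set" where
  "comp_verts C v = {u. (\<lambda>x y. {x, y} \<in> C)\<^sup>*\<^sup>* v u}"

definition comp_edges :: "hedge set \<Rightarrow> hvertex \<Rightarrow> hedge set" where
  "comp_edges C v = {e \<in> C. e \<subseteq> comp_verts C v}"

text \<open>A Clar cover: a spanning subgraph (vertex set = all vertices of H, edge set C)
  each of whose components is a hexagon of H or a single edge.\<close>
definition clar_cover :: "cell set \<Rightarrow> hedge set \<Rightarrow> bool" where
  "clar_cover S C \<longleftrightarrow> C \<subseteq> hs_edges S \<and>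
     (\<forall>v\<in>hs_verts S.
        (\<exists>c\<in>S. comp_edges C v = hexE c) \<or> (\<exists>e. comp_edges C v = {e}))"

definition hex_components :: "cell set \<Rightarrow> hedge set \<Rightarrow> cell set" where
  "hex_components S C = {c \<in> S. \<exists>v\<in>hs_verts S. comp_edges C v = hexE c}"

definition edge_components :: "cell set \<Rightarrow> hedge set \<Rightarrow> hedge set" where
  "edge_components S C = {e. \<exists>v\<in>hs_verts S. comp_edges C v = {e}}"

definition alternating :: "hedge set \<Rightarrow> cell \<Rightarrow> bool" where
  "alternating M c \<longleftrightarrow>
     (\<forall>e1\<in>hexE c. \<forall>e2\<in>hexE c. e1 \<noteq> e2 \<and> e1 \<inter> e2 \<noteq> {} \<longrightarrow> (e1 \<in> M \<longleftrightarrow> e2 \<notin> M))"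

definition res_adj :: "cell set \<Rightarrow> hedge set \<Rightarrow> hedge set \<Rightarrow> bool" where
  "res_adj S M1 M2 \<longleftrightarrow> perfect_matching S M1 \<and> perfect_matching S M2 \<and>
     (\<exists>c\<in>S. (M1 - M2) \<union> (M2 - M1) = hexE c)"

definition resonance_graph :: "cell set \<Rightarrow> hedge set set \<times> hedge set set set" where
  "resonance_graph S = ({M. perfect_matching S M}, {{M1, M2} | M1 M2. res_adj S M1 M2})"

definition induced_subgraph ::
  "'a set \<times> 'a set set \<Rightarrow> 'a set \<Rightarrow> 'a set \<times> 'a set set" where
  "induced_subgraph G W = (fst G \<inter> W, {e \<in> snd G. e \<subseteq> W})"

definition subgraph :: "'a set \<times> 'a set set \<Rightarrow> 'a set \<times> 'a set set \<Rightarrow> bool" where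
  "subgraph G G' \<longleftrightarrow> fst G \<subseteq> fst G' \<and> snd G \<subseteq> snd G'"

definition fC :: "cell set \<Rightarrow> hedge set \<Rightarrow> hedge set set \<times> hedge set set set" where
  "fC S C = induced_subgraph (resonance_graph S)
     {M. perfect_matching S M \<and> (\<forall>c\<in>hex_components S C. alternating M c) \<and>
         (\<forall>e\<in>edge_components S C. e \<in> M)}"

end

theory Submission
  imports Defs
begin


lemma cyc_dbl:
  assumes d: "distinct [u0,u1,u2,u3,u4,u5::'a]"
    and "e \<in> {{u0,u1},{u1,u2},{u2,u3},{u3,u4},{u4,u5},{u5,u0}}"
  shows "\<exists>x y. x \<noteq> y \<and> e = {x,y}"
proof -
  have "u0 \<noteq> u1" "u1 \<noteq> u2" "u2 \<noteq> u3" "u3 \<noteq> u4" "u4 \<noteq> u5" "u5 \<noteq> u0" using d by auto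
  then show ?thesis using assms(2) by blast
qed

lemma hexV_eq: "hexV c = \<Union>(hexE c)"
  by (cases c) (auto simp: hexE_def hexV_def)

lemma cyc_two:
  assumes d: "distinct [u0,u1,u2,u3,u4,u5::'a]" and x: "x \<in> {u0,u1,u2,u3,u4,u5}"
  shows "\<exists>e1 e2. e1 \<in> {{u0,u1},{u1,u2},{u2,u3},{u3,u4},{u4,u5},{u5,u0}} \<and>
      e2 \<in> {{u0,u1},{u1,u2},{u2,u3},{u3,u4},{u4,u5},{u5,u0}} \<and> e1 \<noteq> e2 \<and> x \<in> e1 \<and> x \<in> e2 \<and>
      (\<forall>f\<in>{{u0,u1},{u1,u2},{u2,u3},{u3,u4},{u4,u5},{u5,u0}}. x \<in> f \<longrightarrow> f = e1 \<or> f = e2)"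
proof -
  from x consider "x=u0"|"x=u1"|"x=u2"|"x=u3"|"x=u4"|"x=u5" by blast
  then show ?thesis
  proof cases
    case 1 show ?thesis apply (rule exI[of _ "{u5,u0}"], rule exI[of _ "{u0,u1}"]) using d 1 by (auto simp: doubleton_eq_iff)
  next
    case 2 show ?thesis apply (rule exI[of _ "{u0,u1}"], rule exI[of _ "{u1,u2}"]) using d 2 by (auto simp: doubleton_eq_iff)
  next
    case 3 show ?thesis apply (rule exI[of _ "{u1,u2}"], rule exI[of _ "{u2,u3}"]) using d 3 by (auto simp: doubleton_eq_iff)
  next
    case 4 show ?thesis apply (rule exI[of _ "{u2,u3}"], rule exI[of _ "{u3,u4}"]) using d 4 by (auto simp: doubleton_eq_iff)
  next
    case 5 show ?thesis apply (rule exI[of _ "{u3,u4}"], rule exI[of _ "{u4,u5}"]) using d 5 by (auto simp: doubleton_eq_iff)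
  next
    case 6 show ?thesis apply (rule exI[of _ "{u4,u5}"], rule exI[of _ "{u5,u0}"]) using d 6 by (auto simp: doubleton_eq_iff)
  qed
qed

lemma cyc_alt:
  assumes d: "distinct [u0,u1,u2,u3,u4,u5::'a]"
  shows "\<forall>e1\<in>{{u0,u1},{u1,u2},{u2,u3},{u3,u4},{u4,u5},{u5,u0}}. \<forall>e2\<in>{{u0,u1},{u1,u2},{u2,u3},{u3,u4},{u4,u5},{u5,u0}}.
     e1 \<noteq> e2 \<and> e1 \<inter> e2 \<noteq> {} \<longrightarrow> (e1 \<in> {{u0,u1},{u2,u3},{u4,u5}} \<longleftrightarrow> e2 \<notin> {{u0,u1},{u2,u3},{u4,u5}})"
  using d by (auto simp: doubleton_eq_iff)

lemma cyc_disj: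
  assumes d: "distinct [u0,u1,u2,u3,u4,u5::'a]"
  shows "{{u0,u1},{u2,u3},{u4,u5}} \<inter> {{u1,u2},{u3,u4},{u5,u0}} = {}"
  using d by (auto simp: doubleton_eq_iff)

definition hA :: "cell \<Rightarrow> hedge set" where
  "hA c = (case c of (a, b) \<Rightarrow>
     {{(a, b, True), (a - 1, b, False)},
      {(a - 1, b, True), (a - 1, b - 1, False)},
      {(a, b - 1, True), (a, b - 1, False)}})"
definition hB :: "cell \<Rightarrow> hedge set" where
  "hB c = (case c of (a, b) \<Rightarrow>
     {{(a - 1, b, False), (a - 1, b, True)},
      {(a - 1, b - 1, False), (a, b - 1, True)},
      {(a, b - 1, False), (a, b, True)}})"

lemma hex_dist0: "distinct [(a, b, True), (a - 1, b, False), (a - 1, b, True), (a - 1, b - 1, False), (a, b - 1, True), (a::int, b - 1::int, False)]"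
  by auto

lemma hexE_dbl: "e \<in> hexE c \<Longrightarrow> \<exists>x y. x \<noteq> y \<and> e = {x,y}"
proof -
  assume e: "e \<in> hexE c"
  obtain a b where c: "c = (a,b)" by (cases c)
  show ?thesis by (rule cyc_dbl[OF hex_dist0]) (use e in \<open>simp add: c hexE_def\<close>)
qed

lemma hex_two: "x \<in> hexV c \<Longrightarrow> \<exists>e1 e2. e1 \<in> hexE c \<and> e2 \<in> hexE c \<and> e1 \<noteq> e2 \<and> x \<in> e1 \<and> x \<in> e2 \<and>
      (\<forall>f\<in>hexE c. x \<in> f \<longrightarrow> f = e1 \<or> f = e2)"
proof -
  assume x: "x \<in> hexV c"
  obtain a b where c: "c = (a,b)" by (cases c)
  show ?thesis unfolding c hexE_def prod.case
    by (rule cyc_two[OF hex_dist0]) (use x c in \<open>auto simp: hexV_def\<close>)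
qed

lemma hA_alt: "alternating (hA c) c"
proof -
  obtain a b where c: "c = (a,b)" by (cases c)
  show ?thesis unfolding c alternating_def hexE_def hA_def prod.case
    by (rule cyc_alt[OF hex_dist0])
qed

lemma hAB_disj: "hA c \<inter> hB c = {}"
proof -
  obtain a b where c: "c = (a,b)" by (cases c)
  show ?thesis unfolding c hB_def hA_def prod.case
    by (rule cyc_disj[OF hex_dist0])
qed

lemma hAB_un: "hA c \<union> hB c = hexE c"
  by (cases c) (auto simp: hA_def hB_def hexE_def)

lemma hB_alt: "alternating (hB c) c"
  using hA_alt[of c] hAB_disj[of c] hAB_un[of c] unfolding alternating_def by blast

lemma tri_two:
  assumes "x \<in> hexV c" "x \<in> hexV d" "c \<noteq> d"
  shows "x = (min (fst c) (fst d), min (snd c) (snd d), True) \<or>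
         x = (max (fst c) (fst d) - 1, max (snd c) (snd d) - 1, False)"
proof -
  obtain a b where c: "c = (a,b)" by (cases c)
  obtain a' b' where d: "d = (a',b')" by (cases d)
  obtain i j t where x: "x = (i,j,t)" by (cases x) auto
  show ?thesis using assms unfolding c d x hexV_def by (cases t) (auto simp: min_def max_def)
qed

lemma three_same:
  assumes "x \<in> hexV c" "x \<in> hexV d" "y \<in> hexV c" "y \<in> hexV d" "z \<in> hexV c" "z \<in> hexV d"
    "x \<noteq> y" "y \<noteq> z" "x \<noteq> z"
  shows "c = d"
  using tri_two[OF assms(1,2)] tri_two[OF assms(3,4)] tri_two[OF assms(5,6)] assms(7-9) by metis

lemma hexE_inj: "hexE c = hexE d \<Longrightarrow> c = d"
proof -
  assume h: "hexE c = hexE d"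
  obtain a b where c: "c = (a,b)" by (cases c)
  have "hexV c = hexV d" using h hexV_eq by metis
  moreover have "(a,b,True) \<in> hexV c" "(a-1,b,True) \<in> hexV c" "(a,b-1,True) \<in> hexV c"
    unfolding c hexV_def by auto
  ultimately show ?thesis using three_same by (metis prod.inject diff_0_right diff_left_imp_eq zero_neq_one)
qed

lemma hexE_not_single: "hexE c \<noteq> {e}"
  by (cases c) (auto simp: hexE_def doubleton_eq_iff)



lemma hexV_I: "f \<in> hexE c \<Longrightarrow> x \<in> f \<Longrightarrow> x \<in> hexV c"
  by (simp add: hexV_eq) blast

lemma hexV_E: "x \<in> hexV c \<Longrightarrow> \<exists>f\<in>hexE c. x \<in> f"
  by (simp add: hexV_eq)

lemma hs_edges_dbl: "e \<in> hs_edges S \<Longrightarrow> \<exists>x y. x \<noteq> y \<and> e = {x,y}"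
  unfolding hs_edges_def using hexE_dbl by blast

lemma hs_edges_verts: "e \<in> hs_edges S \<Longrightarrow> x \<in> e \<Longrightarrow> x \<in> hs_verts S"
  unfolding hs_edges_def hs_verts_def using hexV_I by blast

lemma K1:
  assumes sub: "C \<subseteq> hs_edges S" and e: "e \<in> C" and v: "v \<in> e"
  shows "e \<in> comp_edges C v"
proof -
  obtain x y where xy: "x \<noteq> y" "e = {x,y}" using hs_edges_dbl sub e by blast
  have "\<forall>u\<in>e. u = v \<or> {v,u} = e" using xy v by auto
  then have "e \<subseteq> comp_verts C v" unfolding comp_verts_def using e
    by (auto intro: r_into_rtranclp)
  then show ?thesis using e unfolding comp_edges_def by auto
qed

lemma rt_sym:
  assumes "(\<lambda>x y. {x, y} \<in> C)\<^sup>*\<^sup>* v w" shows "(\<lambda>x y. {x, y} \<in> C)\<^sup>*\<^sup>* w v"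
  using assms
proof induction
  case base then show ?case by simp
next
  case (step y z)
  have "{z,y} \<in> C" using step(2) by (simp add: insert_commute)
  then show ?case using step(3) by (rule converse_rtranclp_into_rtranclp)
qed

lemma K2:
  assumes e: "e \<in> comp_edges C v" and w: "w \<in> e"
  shows "comp_edges C w = comp_edges C v"
proof -
  have r: "(\<lambda>x y. {x, y} \<in> C)\<^sup>*\<^sup>* v w" using e w unfolding comp_edges_def comp_verts_def by auto
  have "comp_verts C w = comp_verts C v"
    unfolding comp_verts_def using r rt_sym[OF r] by (auto intro: rtranclp_trans)
  then show ?thesis unfolding comp_edges_def by simp
qed

lemma K0:
  assumes sub: "C \<subseteq> hs_edges S" and ne: "comp_edges C v \<noteq> {}"
  shows "\<exists>e\<in>C. v \<in> e"
proof (rule ccontr)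
  assume n: "\<not> (\<exists>e\<in>C. v \<in> e)"
  have "comp_verts C v \<subseteq> {v}"
  proof
    fix u assume "u \<in> comp_verts C v"
    then have "(\<lambda>x y. {x, y} \<in> C)\<^sup>*\<^sup>* v u" unfolding comp_verts_def by simp
    then show "u \<in> {v}"
      by (cases rule: converse_rtranclpE) (use n in auto)
  qed
  moreover obtain e where "e \<in> comp_edges C v" using ne by auto
  ultimately have "e \<in> C" "e \<subseteq> {v}" unfolding comp_edges_def by auto
  then show False using hs_edges_dbl sub by blast
qed

lemma cc_sub: "clar_cover S C \<Longrightarrow> C \<subseteq> hs_edges S"
  unfolding clar_cover_def by simp

lemma hexE_ne: "hexE d \<noteq> {}" by (cases d) (simp add: hexE_def)

lemma cc_cases:
  assumes cc: "clar_cover S C" and v: "v \<in> hs_verts S"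
  shows "(\<exists>d\<in>S. comp_edges C v = hexE d \<and> v \<in> hexV d) \<or> (\<exists>e. comp_edges C v = {e} \<and> v \<in> e \<and> e \<in> C)"
proof -
  have sub: "C \<subseteq> hs_edges S" using cc_sub[OF cc] .
  have k: "(\<exists>d\<in>S. comp_edges C v = hexE d) \<or> (\<exists>e. comp_edges C v = {e})"
    using cc v unfolding clar_cover_def by blast
  then have "comp_edges C v \<noteq> {}" using hexE_ne by blast
  then obtain e where e: "e \<in> C" "v \<in> e" using K0[OF sub] by blast
  have ek: "e \<in> comp_edges C v" using K1[OF sub e] .
  from k show ?thesis
  proof
    assume "\<exists>d\<in>S. comp_edges C v = hexE d"
    then obtain d where d: "d \<in> S" "comp_edges C v = hexE d" by blast
    have "e \<in> hexE d" using ek d(2) by simp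
    then have "v \<in> hexV d" using e(2) by (rule hexV_I)
    then show ?thesis using d by (intro disjI1 bexI[of _ d]) auto
  next
    assume "\<exists>e. comp_edges C v = {e}"
    then obtain e' where "comp_edges C v = {e'}" by blast
    then show ?thesis using ek e by (intro disjI2 exI[of _ e]) auto
  qed
qed

lemma comp_sub: "comp_edges C v \<subseteq> C" unfolding comp_edges_def by auto

lemma hexcomp_all:
  assumes "d \<in> hex_components S C" "x \<in> hexV d"
  shows "comp_edges C x = hexE d"
proof -
  obtain v where v: "comp_edges C v = hexE d" using assms(1) unfolding hex_components_def by blast
  obtain f where "f \<in> hexE d" "x \<in> f" using hexV_E[OF assms(2)] by blast
  then show ?thesis using K2[of f C v x] v by simp
qed

lemma hexcomp_sub: "d \<in> hex_components S C \<Longrightarrow> hexE d \<subseteq> C"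
  unfolding hex_components_def using comp_sub by blast

lemma edgecomp_in: "e \<in> edge_components S C \<Longrightarrow> e \<in> C"
  unfolding edge_components_def using comp_sub by blast

lemma edgecomp_not_hex:
  assumes cc: "clar_cover S C" and e: "e \<in> edge_components S C" and d: "d \<in> hex_components S C"
  shows "e \<notin> hexE d"
proof
  assume ed: "e \<in> hexE d"
  obtain w where w: "comp_edges C w = {e}" using e unfolding edge_components_def by blast
  obtain x y where xy: "x \<noteq> y" "e = {x,y}" using hexE_dbl ed by blast
  have "x \<in> hexV d" using ed xy hexV_I by blast
  then have "comp_edges C x = hexE d" using hexcomp_all[OF d] by blast
  moreover have "comp_edges C x = {e}" using K2[of e C w x] w xy by simp
  ultimately show False using hexE_not_single by metis
qed

lemma hexcomp_uniq:
  assumes d: "d \<in> hex_components S C" and d': "d' \<in> hex_components S C"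
    and f: "f \<in> hexE d" "f \<in> hexE d'"
  shows "d = d'"
proof -
  obtain x y where xy: "x \<noteq> y" "f = {x,y}" using hexE_dbl f by blast
  have "comp_edges C x = hexE d" using hexcomp_all[OF d] f xy hexV_I by blast
  moreover have "comp_edges C x = hexE d'" using hexcomp_all[OF d'] f xy hexV_I by blast
  ultimately show ?thesis using hexE_inj by metis
qed

lemma alt_restrict: "M \<inter> hexE c = N \<inter> hexE c \<Longrightarrow> alternating M c = alternating N c"
  unfolding alternating_def by blast

lemma alt_unique:
  assumes "alternating M c" "x \<in> hexV c"
  shows "\<exists>f. f \<in> hexE c \<and> f \<in> M \<and> x \<in> f \<and> (\<forall>g. g \<in> hexE c \<and> g \<in> M \<and> x \<in> g \<longrightarrow> g = f)"
proof -
  obtain e1 e2 where e: "e1 \<in> hexE c" "e2 \<in> hexE c" "e1 \<noteq> e2" "x \<in> e1" "x \<in> e2"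
     "\<forall>f\<in>hexE c. x \<in> f \<longrightarrow> f = e1 \<or> f = e2" using hex_two[OF assms(2)] by blast
  have "e1 \<in> M \<longleftrightarrow> e2 \<notin> M" using assms(1) e unfolding alternating_def by blast
  then show ?thesis using e by metis
qed

lemma pm_unique:
  "perfect_matching S M \<Longrightarrow> v \<in> hs_verts S \<Longrightarrow> e \<in> M \<Longrightarrow> f \<in> M \<Longrightarrow> v \<in> e \<Longrightarrow> v \<in> f \<Longrightarrow> e = f"
  unfolding perfect_matching_def by blast

definition MC :: "cell set \<Rightarrow> hedge set \<Rightarrow> cell set \<Rightarrow> hedge set" where
  "MC S C \<sigma> = edge_components S C \<union> (\<Union>d\<in>hex_components S C. if d \<in> \<sigma> then hA d else hB d)"

definition Wset :: "cell set \<Rightarrow> hedge set \<Rightarrow> hedge set set" where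
  "Wset S C = {M. perfect_matching S M \<and> (\<forall>c\<in>hex_components S C. alternating M c) \<and>
         (\<forall>e\<in>edge_components S C. e \<in> M)}"

lemma MC_sub: "MC S C \<sigma> \<subseteq> C"
proof -
  have "(if d \<in> \<sigma> then hA d else hB d) \<subseteq> C" if "d \<in> hex_components S C" for d
    using hexcomp_sub[OF that] hAB_un[of d] by auto
  then show ?thesis unfolding MC_def using edgecomp_in by blast
qed

lemma X_sub: "(if d \<in> \<sigma> then hA d else hB d) \<subseteq> hexE d"
  using hAB_un[of d] by auto

lemma MC_hex:
  assumes cc: "clar_cover S C" and d: "d \<in> hex_components S C"
  shows "MC S C \<sigma> \<inter> hexE d = (if d \<in> \<sigma> then hA d else hB d)"
proof (rule set_eqI)
  fix f
  show "f \<in> MC S C \<sigma> \<inter> hexE d \<longleftrightarrow> f \<in> (if d \<in> \<sigma> then hA d else hB d)"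
  proof
    assume f: "f \<in> MC S C \<sigma> \<inter> hexE d"
    have "f \<notin> edge_components S C" using edgecomp_not_hex[OF cc _ d] f by auto
    then obtain d' where d': "d' \<in> hex_components S C" "f \<in> (if d' \<in> \<sigma> then hA d' else hB d')"
      using f unfolding MC_def by auto
    have "f \<in> hexE d'" using d'(2) X_sub[of d' \<sigma>] by blast
    then have "d' = d" using hexcomp_uniq[OF d d'(1)] f by auto
    then show "f \<in> (if d \<in> \<sigma> then hA d else hB d)" using d'(2) \<open>d' = d\<close> by blast
  next
    assume f: "f \<in> (if d \<in> \<sigma> then hA d else hB d)"
    have "f \<in> MC S C \<sigma>" unfolding MC_def by (rule UnI2) (rule UN_I[where B="\<lambda>d. if d \<in> \<sigma> then hA d else hB d", OF d f])
    then show "f \<in> MC S C \<sigma> \<inter> hexE d" using f X_sub[of d \<sigma>] by blast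
  qed
qed

lemma MC_alt:
  assumes cc: "clar_cover S C" and d: "d \<in> hex_components S C"
  shows "alternating (MC S C \<sigma>) d"
proof -
  have "alternating (if d \<in> \<sigma> then hA d else hB d) d" using hA_alt hB_alt by simp
  moreover have "(if d \<in> \<sigma> then hA d else hB d) \<inter> hexE d = (if d \<in> \<sigma> then hA d else hB d)"
    using hAB_un[of d] by auto
  ultimately show ?thesis using alt_restrict[of "MC S C \<sigma>" d "if d \<in> \<sigma> then hA d else hB d"] MC_hex[OF cc d]
    by simp
qed

lemma MC_W:
  assumes cc: "clar_cover S C"
  shows "MC S C \<sigma> \<in> Wset S C"
proof -
  have sub: "C \<subseteq> hs_edges S" using cc_sub[OF cc] .
  have "\<exists>!e. e \<in> MC S C \<sigma> \<and> v \<in> e" if v: "v \<in> hs_verts S" for v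
  proof -
    have at: "f \<in> comp_edges C v" if "f \<in> MC S C \<sigma>" "v \<in> f" for f
      using K1[OF sub] MC_sub that by blast
    from cc_cases[OF cc v] show ?thesis
    proof
      assume "\<exists>d\<in>S. comp_edges C v = hexE d \<and> v \<in> hexV d"
      then obtain d where d: "d \<in> S" "comp_edges C v = hexE d" "v \<in> hexV d" by blast
      have dh: "d \<in> hex_components S C" unfolding hex_components_def using d v by blast
      obtain f where f: "f \<in> hexE d" "f \<in> MC S C \<sigma>" "v \<in> f"
         "\<forall>g. g \<in> hexE d \<and> g \<in> MC S C \<sigma> \<and> v \<in> g \<longrightarrow> g = f"
        using alt_unique[OF MC_alt[OF cc dh] d(3)] by blast
      show ?thesis using f at d(2) by blast
    next
      assume "\<exists>e. comp_edges C v = {e} \<and> v \<in> e \<and> e \<in> C"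
      then obtain e where e: "comp_edges C v = {e}" "v \<in> e" by blast
      have "e \<in> MC S C \<sigma>" unfolding MC_def edge_components_def using e v by blast
      then show ?thesis using e at by blast
    qed
  qed
  then have "perfect_matching S (MC S C \<sigma>)" unfolding perfect_matching_def using MC_sub sub by blast
  moreover have "edge_components S C \<subseteq> MC S C \<sigma>" unfolding MC_def by (rule Un_upper1)
  ultimately show ?thesis unfolding Wset_def using MC_alt[OF cc] by blast
qed



lemma subgraph_iff: "subgraph (fC S C) (fC S C') \<longleftrightarrow> Wset S C \<subseteq> Wset S C'"
proof -
  have f: "fst (fC S X) = Wset S X" for X
    unfolding fC_def induced_subgraph_def resonance_graph_def Wset_def by auto
  have s: "snd (fC S X) = {e \<in> snd (resonance_graph S). e \<subseteq> Wset S X}" for X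
    unfolding fC_def induced_subgraph_def Wset_def by simp
  show ?thesis unfolding subgraph_def f s by blast
qed

lemma dbl_at: "x \<noteq> y \<Longrightarrow> e = {x,y} \<Longrightarrow> v \<in> e \<Longrightarrow> \<exists>w. v \<noteq> w \<and> e = {v,w}"
proof (cases "v = x")
  case True
  then show "x \<noteq> y \<Longrightarrow> e = {x,y} \<Longrightarrow> v \<in> e \<Longrightarrow> \<exists>w. v \<noteq> w \<and> e = {v,w}" by blast
next
  case False
  then show "x \<noteq> y \<Longrightarrow> e = {x,y} \<Longrightarrow> v \<in> e \<Longrightarrow> \<exists>w. v \<noteq> w \<and> e = {v,w}"
    by (intro exI[of _ x]) (auto simp: insert_commute)
qed

theorem theorem3:
  fixes S :: "cell set" and C C' :: "hedge set"
  assumes "hexagonal_system S" and "kekulean S"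
    and "clar_cover S C" and "clar_cover S C'"
  shows "subgraph (fC S C) (fC S C') \<longleftrightarrow>
    (hex_components S C \<subseteq> hex_components S C' \<and>
     (\<forall>e\<in>hs_edges S. e \<notin> (\<Union>c\<in>hex_components S C'. hexE c) \<longrightarrow> (e \<in> C \<longleftrightarrow> e \<in> C')))"
proof -
  have cc: "clar_cover S C" and cc': "clar_cover S C'" using assms by auto
  show ?thesis unfolding subgraph_iff
  proof
    assume Wsub: "Wset S C \<subseteq> Wset S C'"
    have part1: "hex_components S C \<subseteq> hex_components S C'"
    proof
      fix c assume c: "c \<in> hex_components S C"
      have cS: "c \<in> S" using c unfolding hex_components_def by blast
      define x where "x = (fst c, snd c, True)"
      have xc: "x \<in> hexV c" unfolding x_def by (cases c) (simp add: hexV_def)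
      have xv: "x \<in> hs_verts S" using xc cS unfolding hs_verts_def by blast
      let ?M1 = "MC S C {c}"
      let ?M2 = "MC S C {}"
      have W1: "?M1 \<in> Wset S C'" and W2: "?M2 \<in> Wset S C'" using MC_W[OF cc] Wsub by blast+
      have pm1: "perfect_matching S ?M1" using W1 unfolding Wset_def by blast
      have pm2: "perfect_matching S ?M2" using W2 unfolding Wset_def by blast
      have h1: "?M1 \<inter> hexE c = hA c" using MC_hex[OF cc c, of "{c}"] by simp
      have h2: "?M2 \<inter> hexE c = hB c" using MC_hex[OF cc c, of "{}"] by simp
      obtain a where a: "a \<in> hexE c" "a \<in> ?M1" "x \<in> a" using alt_unique[OF MC_alt[OF cc c] xc] by blast
      obtain b where b: "b \<in> hexE c" "b \<in> ?M2" "x \<in> b" using alt_unique[OF MC_alt[OF cc c] xc] by blast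
      have "a \<in> hA c" using a h1 by blast
      moreover have "b \<in> hB c" using b h2 by blast
      ultimately have ab: "a \<noteq> b" using hAB_disj[of c] by blast
      from cc_cases[OF cc' xv] show "c \<in> hex_components S C'"
      proof
        assume "\<exists>d\<in>S. comp_edges C' x = hexE d \<and> x \<in> hexV d"
        then obtain d where d: "d \<in> S" "comp_edges C' x = hexE d" "x \<in> hexV d" by blast
        have dh: "d \<in> hex_components S C'" unfolding hex_components_def using d xv by blast
        have alt1: "alternating ?M1 d" using W1 dh unfolding Wset_def by blast
        have alt2: "alternating ?M2 d" using W2 dh unfolding Wset_def by blast
        obtain f where f: "f \<in> hexE d" "f \<in> ?M1" "x \<in> f" using alt_unique[OF alt1 d(3)] by blast
        have "f = a" using pm_unique[OF pm1 xv f(2) a(2) f(3) a(3)] .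
        then have ad: "a \<in> hexE d" using f by simp
        obtain g where g: "g \<in> hexE d" "g \<in> ?M2" "x \<in> g" using alt_unique[OF alt2 d(3)] by blast
        have "g = b" using pm_unique[OF pm2 xv g(2) b(2) g(3) b(3)] .
        then have bd: "b \<in> hexE d" using g by simp
        obtain y where y: "x \<noteq> y" "a = {x,y}" using hexE_dbl[OF a(1)] a(3) dbl_at by metis
        obtain z where z: "x \<noteq> z" "b = {x,z}" using hexE_dbl[OF b(1)] b(3) dbl_at by metis
        have yz: "y \<noteq> z" using ab y z by blast
        have "y \<in> hexV c" "y \<in> hexV d" using hexV_I[OF a(1)] hexV_I[OF ad] y by auto
        moreover have "z \<in> hexV c" "z \<in> hexV d" using hexV_I[OF b(1)] hexV_I[OF bd] z by auto
        ultimately have "c = d" using three_same[OF xc d(3)] y(1) z(1) yz by blast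
        then show ?thesis using dh by simp
      next
        assume "\<exists>e. comp_edges C' x = {e} \<and> x \<in> e \<and> e \<in> C'"
        then obtain e where e: "comp_edges C' x = {e}" "x \<in> e" by blast
        have "e \<in> edge_components S C'" unfolding edge_components_def using e xv by blast
        then have "e \<in> ?M1" "e \<in> ?M2" using W1 W2 unfolding Wset_def by blast+
        then have "e = a" "e = b" using pm_unique[OF pm1 xv _ a(2) e(2) a(3)]
            pm_unique[OF pm2 xv _ b(2) e(2) b(3)] by auto
        then show ?thesis using ab by simp
      qed
    qed
    have part2: "\<forall>e\<in>hs_edges S. e \<notin> (\<Union>c\<in>hex_components S C'. hexE c) \<longrightarrow> (e \<in> C \<longleftrightarrow> e \<in> C')"
    proof (intro ballI impI)
      fix e assume eH: "e \<in> hs_edges S" and nU: "e \<notin> (\<Union>c\<in>hex_components S C'. hexE c)"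
      let ?M0 = "MC S C {}"
      have W0: "?M0 \<in> Wset S C'" using MC_W[OF cc] Wsub by blast
      have pm0: "perfect_matching S ?M0" using W0 unfolding Wset_def by blast
      obtain x where xe: "x \<in> e" using hs_edges_dbl[OF eH] by blast
      have xv: "x \<in> hs_verts S" using hs_edges_verts[OF eH xe] .
      show "e \<in> C \<longleftrightarrow> e \<in> C'"
      proof
        assume eC: "e \<in> C"
        have eK: "e \<in> comp_edges C x" using K1[OF cc_sub[OF cc] eC xe] .
        have "e \<in> edge_components S C"
          using cc_cases[OF cc xv]
        proof
          assume "\<exists>d\<in>S. comp_edges C x = hexE d \<and> x \<in> hexV d"
          then obtain d where d: "d \<in> S" "comp_edges C x = hexE d" by blast
          have "d \<in> hex_components S C" unfolding hex_components_def using d xv by blast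
          then have "d \<in> hex_components S C'" using part1 by blast
          moreover have "e \<in> hexE d" using eK d(2) by simp
          ultimately show ?thesis using nU by blast
        next
          assume "\<exists>e. comp_edges C x = {e} \<and> x \<in> e \<and> e \<in> C"
          then obtain e' where "comp_edges C x = {e'}" by blast
          then have "comp_edges C x = {e}" using eK by simp
          then show ?thesis unfolding edge_components_def using xv by blast
        qed
        then have eM: "e \<in> ?M0" unfolding MC_def by (rule UnI1)
        show "e \<in> C'"
          using cc_cases[OF cc' xv]
        proof
          assume "\<exists>d\<in>S. comp_edges C' x = hexE d \<and> x \<in> hexV d"
          then obtain d where d: "d \<in> S" "comp_edges C' x = hexE d" "x \<in> hexV d" by blast
          have dh: "d \<in> hex_components S C'" unfolding hex_components_def using d xv by blast
          have "alternating ?M0 d" using W0 dh unfolding Wset_def by blast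
          then obtain f where f: "f \<in> hexE d" "f \<in> ?M0" "x \<in> f" using alt_unique d(3) by blast
          have "f = e" using pm_unique[OF pm0 xv f(2) eM f(3) xe] .
          then show ?thesis using nU dh f(1) by blast
        next
          assume "\<exists>e. comp_edges C' x = {e} \<and> x \<in> e \<and> e \<in> C'"
          then obtain f where f: "comp_edges C' x = {f}" "x \<in> f" "f \<in> C'" by blast
          have "f \<in> edge_components S C'" unfolding edge_components_def using f xv by blast
          then have "f \<in> ?M0" using W0 unfolding Wset_def by blast
          then have "f = e" using pm_unique[OF pm0 xv _ eM f(2) xe] by blast
          then show ?thesis using f by simp
        qed
      next
        assume eC': "e \<in> C'"
        have eK: "e \<in> comp_edges C' x" using K1[OF cc_sub[OF cc'] eC' xe] .
        have "e \<in> edge_components S C'"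
          using cc_cases[OF cc' xv]
        proof
          assume "\<exists>d\<in>S. comp_edges C' x = hexE d \<and> x \<in> hexV d"
          then obtain d where d: "d \<in> S" "comp_edges C' x = hexE d" by blast
          have "d \<in> hex_components S C'" unfolding hex_components_def using d xv by blast
          moreover have "e \<in> hexE d" using eK d(2) by simp
          ultimately show ?thesis using nU by blast
        next
          assume "\<exists>e. comp_edges C' x = {e} \<and> x \<in> e \<and> e \<in> C'"
          then obtain e' where "comp_edges C' x = {e'}" by blast
          then have "comp_edges C' x = {e}" using eK by simp
          then show ?thesis unfolding edge_components_def using xv by blast
        qed
        then have "e \<in> ?M0" using W0 unfolding Wset_def by blast
        then show "e \<in> C" using MC_sub by blast
      qed
    qed
    show "hex_components S C \<subseteq> hex_components S C' \<and>
     (\<forall>e\<in>hs_edges S. e \<notin> (\<Union>c\<in>hex_components S C'. hexE c) \<longrightarrow> (e \<in> C \<longleftrightarrow> e \<in> C'))"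
      using part1 part2 by blast
  next
    assume R: "hex_components S C \<subseteq> hex_components S C' \<and>
     (\<forall>e\<in>hs_edges S. e \<notin> (\<Union>c\<in>hex_components S C'. hexE c) \<longrightarrow> (e \<in> C \<longleftrightarrow> e \<in> C'))"
    then have hsub: "hex_components S C \<subseteq> hex_components S C'"
      and agree: "\<And>e. e \<in> hs_edges S \<Longrightarrow> e \<notin> (\<Union>c\<in>hex_components S C'. hexE c) \<Longrightarrow> (e \<in> C \<longleftrightarrow> e \<in> C')"
      by blast+
    show "Wset S C \<subseteq> Wset S C'"
    proof
      fix M assume M: "M \<in> Wset S C"
      have pm: "perfect_matching S M" and altC: "\<And>c. c \<in> hex_components S C \<Longrightarrow> alternating M c"
        and edC: "\<And>e. e \<in> edge_components S C \<Longrightarrow> e \<in> M"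
        using M unfolding Wset_def by blast+
      have E: "\<forall>e\<in>edge_components S C'. e \<in> M"
      proof
        fix e assume e: "e \<in> edge_components S C'"
        have eC': "e \<in> C'" using edgecomp_in[OF e] .
        have eH: "e \<in> hs_edges S" using cc_sub[OF cc'] eC' by blast
        have nU: "e \<notin> (\<Union>c\<in>hex_components S C'. hexE c)" using edgecomp_not_hex[OF cc' e] by blast
        have eC: "e \<in> C" using agree[OF eH nU] eC' by blast
        obtain x where xe: "x \<in> e" using hs_edges_dbl[OF eH] by blast
        have xv: "x \<in> hs_verts S" using hs_edges_verts[OF eH xe] .
        have eK: "e \<in> comp_edges C x" using K1[OF cc_sub[OF cc] eC xe] .
        from cc_cases[OF cc xv] show "e \<in> M"
        proof
          assume "\<exists>d\<in>S. comp_edges C x = hexE d \<and> x \<in> hexV d"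
          then obtain d where d: "d \<in> S" "comp_edges C x = hexE d" by blast
          have "d \<in> hex_components S C" unfolding hex_components_def using d xv by blast
          then have "d \<in> hex_components S C'" using hsub by blast
          moreover have "e \<in> hexE d" using eK d(2) by simp
          ultimately show ?thesis using nU by blast
        next
          assume "\<exists>e. comp_edges C x = {e} \<and> x \<in> e \<and> e \<in> C"
          then obtain e' where "comp_edges C x = {e'}" by blast
          then have "comp_edges C x = {e}" using eK by simp
          then have "e \<in> edge_components S C" unfolding edge_components_def using xv by blast
          then show ?thesis using edC by blast
        qed
      qed
      have A: "\<forall>d\<in>hex_components S C'. alternating M d"
      proof
        fix d assume d: "d \<in> hex_components S C'"
        have dS: "d \<in> S" using d unfolding hex_components_def by blast
        show "alternating M d"
        proof (cases "\<exists>x\<in>hexV d. \<exists>c\<in>S. comp_edges C x = hexE c")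
          case True
          then obtain x c where x: "x \<in> hexV d" "c \<in> S" "comp_edges C x = hexE c" by blast
          have xv: "x \<in> hs_verts S" using x dS unfolding hs_verts_def by blast
          have ch: "c \<in> hex_components S C" unfolding hex_components_def using x xv by blast
          obtain f where f: "f \<in> C" "x \<in> f" using K0[OF cc_sub[OF cc], of x] x(3) hexE_ne by blast
          have "f \<in> hexE c" using K1[OF cc_sub[OF cc] f] x(3) by simp
          then have xc: "x \<in> hexV c" using f(2) by (rule hexV_I)
          have "c \<in> hex_components S C'" using hsub ch by blast
          then have "comp_edges C' x = hexE c" using hexcomp_all xc by blast
          moreover have "comp_edges C' x = hexE d" using hexcomp_all[OF d x(1)] .
          ultimately have "c = d" using hexE_inj by metis
          then show ?thesis using altC[OF ch] by simp
        next
          case False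
          have fx: "\<exists>f. f \<in> hexE d \<and> f \<in> M \<and> x \<in> f" if x: "x \<in> hexV d" for x
          proof -
            have xv: "x \<in> hs_verts S" using x dS unfolding hs_verts_def by blast
            have K'x: "comp_edges C' x = hexE d" using hexcomp_all[OF d x] .
            obtain f where f: "comp_edges C x = {f}" "x \<in> f" "f \<in> C"
              using cc_cases[OF cc xv] False x by blast
            have fE: "f \<in> edge_components S C" unfolding edge_components_def using f xv by blast
            have fH: "f \<in> hs_edges S" using cc_sub[OF cc] f(3) by blast
            have "f \<in> hexE d"
            proof (cases "f \<in> (\<Union>c\<in>hex_components S C'. hexE c)")
              case True
              then obtain d' where d': "d' \<in> hex_components S C'" "f \<in> hexE d'" by blast
              have "x \<in> hexV d'" using d'(2) f(2) by (rule hexV_I)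
              then have "comp_edges C' x = hexE d'" using hexcomp_all[OF d'(1)] by blast
              then show ?thesis using K'x d'(2) by simp
            next
              case False
              then have "f \<in> C'" using agree[OF fH] f(3) by blast
              then have "f \<in> comp_edges C' x" using K1[OF cc_sub[OF cc']] f(2) by blast
              then show ?thesis using K'x by simp
            qed
            then show ?thesis using fE edC f(2) by blast
          qed
          show ?thesis unfolding alternating_def
          proof (intro ballI impI)
            fix e1 e2 assume e1: "e1 \<in> hexE d" and e2: "e2 \<in> hexE d" and ne: "e1 \<noteq> e2 \<and> e1 \<inter> e2 \<noteq> {}"
            obtain x where x: "x \<in> e1" "x \<in> e2" using ne by blast
            have xd: "x \<in> hexV d" using e1 x(1) by (rule hexV_I)
            have xv: "x \<in> hs_verts S" using xd dS unfolding hs_verts_def by blast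
            obtain g1 g2 where g: "\<forall>f\<in>hexE d. x \<in> f \<longrightarrow> f = g1 \<or> f = g2"
              using hex_two[OF xd] by blast
            obtain f where f: "f \<in> hexE d" "f \<in> M" "x \<in> f" using fx[OF xd] by blast
            have "f = e1 \<or> f = e2" using g f e1 e2 x ne by metis
            moreover have "\<not> (e1 \<in> M \<and> e2 \<in> M)"
              using pm_unique[OF pm xv, of e1 e2] x ne by blast
            ultimately show "(e1 \<in> M) = (e2 \<notin> M)" using f(2) by blast
          qed
        qed
      qed
      show "M \<in> Wset S C'" unfolding Wset_def using pm A E by blast
    qed
  qed
qed


end
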